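(* Let $n > m \ge 1$ be integers and let $w = (w_1, \ldots, w_n) \in \mathbb{R}^n$ be a vector of responses, ordered so that units $1, \ldots, m$ are those originally assigned to treatment and units $m+1, \ldots, n$ are those originally assigned to control. A treatment assignment is a vector $\sigma \in \{0,1\}^n$ with exactly $m$ entries equal to $1$ ($\sigma_j = 1$ meaning unit $j$ is assigned to treatment). For $\eta \in \mathbb{R}$ and such an assignment $\sigma$, define $$T_\eta(w, \sigma) := \frac{1}{m}\sum_{j:\sigma_j = 1} \bigl(w_j + \eta \mathbf{1}_{j > m}\bigr) - \frac{1}{n-m}\sum_{j:\sigma_j = 0} \bigl(w_j - \eta \mathbf{1}_{j \le m}\bigr).$$ Let $\sigma_0 = (1, \ldots, 1, 0, \ldots, 0)$ (first $m$ entries equal to $1$) be the original assignment, let $N \ge 1$, and let $\sigma_1, \ldots, \sigma_N$ be any fixed treatment assignments. Define $$P_\eta := \frac{1 + \sum_{j=1}^N \mathbf{1}\{T_\eta(w, \sigma_j) \ge T_\eta(w, \sigma_0)\}}{1 + N}.$$ Then $P_\eta$ is monotonically nondecreasing in $\eta$: for all real $\eta_1 \le \eta_2$, $P_{\eta_1} \le P_{\eta_2}$.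
   Context: This is the two-sample shift problem: under the hypothesized shift $\eta$, a unit originally treated but reassigned to control would have response lower by $\eta$, and a unit originally in control but reassigned to treatment would have response higher by $\eta$; $T_\eta$ is the difference between the treatment-group mean and control-group mean of these adjusted responses. $P_\eta$ is the Monte Carlo randomization $P$-value for the hypothesis that the shift equals $\eta$, computed with the same data $w$ and the same sampled assignments $\sigma_1,\ldots,\sigma_N$ for every $\eta$. *)

theory Defs
  imports Main Complex_Main
begin

definition is_assignment :: "nat \<Rightarrow> nat \<Rightarrow> (nat \<Rightarrow> bool) \<Rightarrow> bool" where
  "is_assignment n m \<sigma> \<longleftrightarrow> card {j \<in> {1..n}. \<sigma> j} = m"

definition T_stat :: "nat \<Rightarrow> nat \<Rightarrow> real \<Rightarrow> (nat \<Rightarrow> real) \<Rightarrow> (nat \<Rightarrow> bool) \<Rightarrow> real" where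
  "T_stat n m \<eta> w \<sigma> =
     (\<Sum>j\<in>{j \<in> {1..n}. \<sigma> j}. w j + (if j > m then \<eta> else 0)) / real m
   - (\<Sum>j\<in>{j \<in> {1..n}. \<not> \<sigma> j}. w j - (if j \<le> m then \<eta> else 0)) / real (n - m)"

definition orig_assignment :: "nat \<Rightarrow> (nat \<Rightarrow> bool)" where
  "orig_assignment m = (\<lambda>j. j \<le> m)"

definition P_val :: "nat \<Rightarrow> nat \<Rightarrow> nat \<Rightarrow> real \<Rightarrow> (nat \<Rightarrow> real) \<Rightarrow> (nat \<Rightarrow> nat \<Rightarrow> bool) \<Rightarrow> real" where
  "P_val n m N \<eta> w sig =
     (1 + real (card {i \<in> {1..N}. T_stat n m \<eta> w (sig i) \<ge> T_stat n m \<eta> w (orig_assignment m)}))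
     / (1 + real N)"

end

theory Submission
  imports Defs
begin

lemma sum_if_const: "finite A \<Longrightarrow> (\<Sum>j\<in>A. if P j then (e::real) else 0) = e * real (card {j\<in>A. P j})"
  by (simp add: sum.inter_filter[symmetric])

lemma T_decomp:
  "T_stat n m \<eta> w \<sigma> = T_stat n m 0 w \<sigma> +
     \<eta> * (real (card {j\<in>{j \<in> {1..n}. \<sigma> j}. j > m}) / real m
         + real (card {j\<in>{j \<in> {1..n}. \<not> \<sigma> j}. j \<le> m}) / real (n - m))"
proof -
  have a: "(\<Sum>j\<in>{j \<in> {1..n}. \<sigma> j}. w j + (if j > m then \<eta> else 0))
      = (\<Sum>j\<in>{j \<in> {1..n}. \<sigma> j}. w j) + \<eta> * real (card {j\<in>{j \<in> {1..n}. \<sigma> j}. j > m})"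
    by (simp add: sum.distrib sum_if_const)
  have b: "(\<Sum>j\<in>{j \<in> {1..n}. \<not> \<sigma> j}. w j - (if j \<le> m then \<eta> else 0))
      = (\<Sum>j\<in>{j \<in> {1..n}. \<not> \<sigma> j}. w j) - \<eta> * real (card {j\<in>{j \<in> {1..n}. \<not> \<sigma> j}. j \<le> m})"
    by (simp add: sum_subtractf sum_if_const)
  show ?thesis unfolding T_stat_def a b by (simp add: field_simps diff_divide_distrib add_divide_distrib)
qed

lemma T_orig: "T_stat n m \<eta> w (orig_assignment m) = T_stat n m 0 w (orig_assignment m)"
proof -
  have "{j\<in>{j \<in> {1..n}. orig_assignment m j}. j > m} = {}"
       "{j\<in>{j \<in> {1..n}. \<not> orig_assignment m j}. j \<le> m} = {}"
    by (auto simp: orig_assignment_def)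
  then show ?thesis by (subst T_decomp) (simp only: card.empty of_nat_0 div_0 add_0 mult_zero_right add_0_right)
qed

theorem mainTheorem1:
  fixes n m N :: nat and w :: "nat \<Rightarrow> real" and sig :: "nat \<Rightarrow> nat \<Rightarrow> bool"
    and \<eta>1 \<eta>2 :: real
  assumes "1 \<le> m" and "m < n" and "1 \<le> N"
    and "\<And>i. i \<in> {1..N} \<Longrightarrow> is_assignment n m (sig i)"
    and "\<eta>1 \<le> \<eta>2"
  shows "P_val n m N \<eta>1 w sig \<le> P_val n m N \<eta>2 w sig"
proof -
  have mono: "T_stat n m \<eta>1 w \<sigma> - T_stat n m \<eta>1 w (orig_assignment m)
      \<le> T_stat n m \<eta>2 w \<sigma> - T_stat n m \<eta>2 w (orig_assignment m)" for \<sigma>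
  proof -
    define c where "c = real (card {j\<in>{j \<in> {1..n}. \<sigma> j}. j > m}) / real m
         + real (card {j\<in>{j \<in> {1..n}. \<not> \<sigma> j}. j \<le> m}) / real (n - m)"
    have c0: "c \<ge> 0" unfolding c_def by simp
    have "\<eta>1 * c \<le> \<eta>2 * c" using c0 assms(5) by (simp add: mult_right_mono)
    then show ?thesis
      apply (subst (1 2) T_decomp[of n m _ w \<sigma>])
      apply (subst (1 2) T_orig)
      unfolding c_def by simp
  qed
  have sub: "{i \<in> {1..N}. T_stat n m \<eta>1 w (sig i) \<ge> T_stat n m \<eta>1 w (orig_assignment m)}
     \<subseteq> {i \<in> {1..N}. T_stat n m \<eta>2 w (sig i) \<ge> T_stat n m \<eta>2 w (orig_assignment m)}"
    using mono by (smt (verit) Collect_mono_iff)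
  have "card {i \<in> {1..N}. T_stat n m \<eta>1 w (sig i) \<ge> T_stat n m \<eta>1 w (orig_assignment m)}
     \<le> card {i \<in> {1..N}. T_stat n m \<eta>2 w (sig i) \<ge> T_stat n m \<eta>2 w (orig_assignment m)}"
    by (rule card_mono[OF _ sub]) simp
  then show ?thesis unfolding P_val_def
    by (simp add: divide_right_mono)
qed

end
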